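(* For every $n\ge1$, the nilpotency index of any $n$-dimensional complex nilpotent anticommutative algebra is at most $F_n+1$. This bound is sharp; for $n\ge6$ it is attained by the algebras of the family $\mathcal{T}_n$.
   Context: $F_n$ denotes the Fibonacci numbers, $F_1=F_2=1$, $F_{n}=F_{n-1}+F_{n-2}$. For an algebra $N$, $N^1=N$, $N^{k+1}=\sum_{i=1}^kN^iN^{k+1-i}$; $N$ is nilpotent if some $N^k=0$, and its nilpotency index is the least such $k\ge1$. An algebra is anticommutative if $xy=-yx$. With respect to a basis $e_1,\dots,e_n$ and structure constants $e_ie_j=\sum_kc_{ij}^ke_k$, for $n\ge6$, $\mathcal{T}_n$ is the family of anticommutative algebras with $c_{ij}^k=0$ whenever $k\le\max\{i,j\}$, such that: $e_ie_{i+1}=e_{i+2}$ for $1\le i\le n-2$; $c_{1i}^{i+2}=c_{2i}^{i+2}=0$ for $4\le i\le n-2$; $c_{13}^4=c_{14}^5=c_{24}^5=c_{15}^6=c_{25}^6=c_{13}^6=0$; $c_{13}^5\ne0$; $c_{35}^6=1$ and (when $n\ge7$) $c_{46}^7=1$; other structure constants arbitrary subject to these and anticommutativity. *)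

theory Defs
  imports Complex_Main "HOL-Number_Theory.Fib"
begin

text \<open>An n-dimensional complex algebra is given by structure constants c i j k
  (for i, j, k in {1..n}) w.r.t. a basis e_1..e_n: e_i e_j = sum_k c i j k e_k.\<close>

type_synonym sconst = "nat \<Rightarrow> nat \<Rightarrow> nat \<Rightarrow> complex"
type_synonym cvec = "nat \<Rightarrow> complex"

definition vecs :: "nat \<Rightarrow> cvec set" where
  "vecs n = {x. \<forall>k. k \<notin> {1..n} \<longrightarrow> x k = 0}"

definition amult :: "sconst \<Rightarrow> nat \<Rightarrow> cvec \<Rightarrow> cvec \<Rightarrow> cvec" where
  "amult c n x y = (\<lambda>k. if k \<in> {1..n}
      then (\<Sum>i=1..n. \<Sum>j=1..n. x i * y j * c i j k) else 0)"

definition cspan :: "cvec set \<Rightarrow> cvec set" where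
  "cspan S = {v. \<exists>t r. finite t \<and> t \<subseteq> S \<and> v = (\<lambda>k. \<Sum>a\<in>t. r a * a k)}"

text \<open>Powers: N^1 = N, N^k = sum_{i=1}^{k-1} N^i N^(k-i), where N^i N^j is the
  span of all products.  (The value at k = 0 is irrelevant.)\<close>
function apow :: "sconst \<Rightarrow> nat \<Rightarrow> nat \<Rightarrow> cvec set" where
  "apow c n k = (if k \<le> 1 then vecs n
     else cspan (\<Union>i\<in>{1..<k}. {amult c n x y | x y. x \<in> apow c n i \<and> y \<in> apow c n (k - i)}))"
  by auto
termination
  by (relation "measure (\<lambda>(c, n, k). k)") auto

definition anticomm :: "sconst \<Rightarrow> nat \<Rightarrow> bool" where
  "anticomm c n \<longleftrightarrow> (\<forall>x\<in>vecs n. \<forall>y\<in>vecs n. amult c n x y = (\<lambda>k. - amult c n y x k))"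

definition nilpotent_alg :: "sconst \<Rightarrow> nat \<Rightarrow> bool" where
  "nilpotent_alg c n \<longleftrightarrow> (\<exists>k\<ge>1. apow c n k = {\<lambda>_. 0})"

definition nil_index :: "sconst \<Rightarrow> nat \<Rightarrow> nat" where
  "nil_index c n = (LEAST k. k \<ge> 1 \<and> apow c n k = {\<lambda>_. 0})"

definition in_T :: "nat \<Rightarrow> sconst \<Rightarrow> bool" where
  "in_T n c \<longleftrightarrow> n \<ge> 6 \<and> anticomm c n
     \<and> (\<forall>i\<in>{1..n}. \<forall>j\<in>{1..n}. \<forall>k\<in>{1..n}. k \<le> max i j \<longrightarrow> c i j k = 0)
     \<and> (\<forall>i. 1 \<le> i \<and> i \<le> n - 2 \<longrightarrow> (\<forall>k\<in>{1..n}. c i (i+1) k = (if k = i + 2 then 1 else 0)))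
     \<and> (\<forall>i. 4 \<le> i \<and> i \<le> n - 2 \<longrightarrow> c 1 i (i+2) = 0 \<and> c 2 i (i+2) = 0)
     \<and> c 1 3 4 = 0 \<and> c 1 4 5 = 0 \<and> c 2 4 5 = 0 \<and> c 1 5 6 = 0 \<and> c 2 5 6 = 0 \<and> c 1 3 6 = 0
     \<and> c 1 3 5 \<noteq> 0
     \<and> c 3 5 6 = 1 \<and> (n \<ge> 7 \<longrightarrow> c 4 6 7 = 1)"

end

theory Submission
  imports Defs "HOL-Library.Function_Algebras"
begin

declare apow.simps[simp del]

lemma apow_le1: "k \<le> 1 \<Longrightarrow> apow c n k = vecs n"
  by (subst apow.simps) simp
lemma apow_ge2: "2 \<le> k \<Longrightarrow> apow c n k = cspan (\<Union>i\<in>{1..<k}. {amult c n x y | x y. x \<in> apow c n i \<and> y \<in> apow c n (k - i)})"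
  by (subst apow.simps) simp

definition sc :: "complex \<Rightarrow> cvec \<Rightarrow> cvec" where "sc r f = (\<lambda>k. r * f k)"

interpretation V: vector_space sc
  by unfold_locales (auto simp: sc_def fun_eq_iff algebra_simps)

lemma sum_fun_apply: "(\<Sum>a\<in>t. f a) k = (\<Sum>a\<in>t. f a k)" for f :: "'a \<Rightarrow> cvec"
  by (induction t rule: infinite_finite_induct) auto

lemma cspan_eq: "cspan S = V.span S"
proof -
  have "\<And>t r. (\<Sum>a\<in>t. sc (r a) a) = (\<lambda>k. \<Sum>a\<in>t. r a * a k)"
    by (auto simp: fun_eq_iff sum_fun_apply sc_def)
  then show ?thesis unfolding cspan_def V.span_explicit by auto
qed

lemma vecs_subspace: "V.subspace (vecs n)"
  unfolding V.subspace_def vecs_def sc_def by auto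

lemma amult_vecs: "amult c n x y \<in> vecs n"
  unfolding vecs_def amult_def by auto

lemma apow_subspace: "V.subspace (apow c n k)"
  by (cases "k \<le> 1") (auto simp: apow_le1 apow_ge2 vecs_subspace cspan_eq)

lemma apow_vecs: "apow c n k \<subseteq> vecs n"
proof (cases "k \<le> 1")
  case True then show ?thesis by (simp add: apow_le1)
next
  case False
  then show ?thesis unfolding apow_ge2[of k, OF ] 
    by (simp add: apow_ge2 cspan_eq) (intro V.span_minimal vecs_subspace, auto simp: amult_vecs)
qed

lemma apow_zero: "0 \<in> apow c n k"
  using apow_subspace V.subspace_0 by blast

lemma apow_mult: "x \<in> apow c n i \<Longrightarrow> y \<in> apow c n j \<Longrightarrow> 1 \<le> i \<Longrightarrow> 1 \<le> j \<Longrightarrow> amult c n x y \<in> apow c n (i+j)"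
  apply (subst apow_ge2, simp)
  apply (simp add: cspan_eq)
  apply (rule V.span_base)
  apply (rule UN_I[of i]) apply simp
  by auto

lemma apow_mono1: "1 \<le> k \<Longrightarrow> apow c n (Suc k) \<subseteq> apow c n k"
proof (induction k rule: less_induct)
  case (less k)
  show ?case
  proof (cases "k = 1")
    case True then show ?thesis using apow_vecs[of c n "Suc k"] by (simp add: apow_le1)
  next
    case False
    hence k2: "k \<ge> 2" using less.prems by simp
    have "\<And>i x y. i \<in> {1..<Suc k} \<Longrightarrow> x \<in> apow c n i \<Longrightarrow> y \<in> apow c n (Suc k - i) \<Longrightarrow> amult c n x y \<in> apow c n k"
    proof -
      fix i x y assume i: "i \<in> {1..<Suc k}" and x: "x \<in> apow c n i" and y: "y \<in> apow c n (Suc k - i)"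
      show "amult c n x y \<in> apow c n k"
      proof (cases "i \<ge> 2")
        case True
        have "apow c n (Suc (i-1)) \<subseteq> apow c n (i-1)" by (rule less.IH) (use True i in auto)
        moreover have "Suc (i-1) = i" using True by simp
        ultimately have "x \<in> apow c n (i - 1)" using x by auto
        then show ?thesis using apow_mult[of x c n "i - 1" y "Suc k - i"] y True i by auto
      next
        case False
        hence "i = 1" using i by auto
        have "apow c n (Suc (k-1)) \<subseteq> apow c n (k-1)" by (rule less.IH) (use k2 in auto)
        moreover have "Suc (k-1) = k" "Suc k - i = k" using k2 \<open>i = 1\<close> by auto
        ultimately have "y \<in> apow c n (k - i)" using y \<open>i = 1\<close> by auto
        then show ?thesis using apow_mult[of x c n i y "k - i"] x \<open>i = 1\<close> k2 by auto
      qed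
    qed
    then show ?thesis
      apply (subst apow_ge2[of "Suc k"], use k2 in simp)
      apply (simp add: cspan_eq)
      apply (rule V.span_minimal)
       apply fastforce
      using apow_subspace by blast
  qed
qed

lemma apow_mono: assumes "1 \<le> i" "i \<le> j" shows "apow c n j \<subseteq> apow c n i"
  using assms(2)
proof (induction j rule: dec_induct)
  case base then show ?case by simp
next
  case (step j) then show ?case using apow_mono1[of j c n] assms(1) by auto
qed

lemma prod_into_span:
  assumes "2 \<le> K" and "\<And>i x y. 1 \<le> i \<Longrightarrow> i < K \<Longrightarrow> x \<in> apow c n i \<Longrightarrow> y \<in> apow c n (K - i) \<Longrightarrow> amult c n x y \<in> S"
    and "V.subspace S"
  shows "apow c n K \<subseteq> S"
  apply (subst apow_ge2[OF assms(1)])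
  apply (simp add: cspan_eq)
  apply (rule V.span_minimal)
  using assms by fastforce+

lemma stab:
  assumes nil: "nilpotent_alg c n" and B2: "2 \<le> B"
    and flat: "\<And>i. s + 1 \<le> i \<Longrightarrow> i < B \<Longrightarrow> apow c n (Suc i) = apow c n i"
    and pairs: "\<And>i j. 1 \<le> i \<Longrightarrow> i \<le> s \<Longrightarrow> 1 \<le> j \<Longrightarrow> j \<le> s \<Longrightarrow> B \<le> i + j \<Longrightarrow>
        apow c n (Suc i) = apow c n i \<or> apow c n (Suc j) = apow c n j \<or>
        (\<forall>x\<in>apow c n i. \<forall>y\<in>apow c n j. amult c n x y \<in> apow c n (Suc (i + j)))"
  shows "apow c n B = {0}"
proof -
  have st: "apow c n (Suc K) = apow c n K" if "B \<le> K" for K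
    using that
  proof (induction K rule: less_induct)
    case (less K)
    have fl: "apow c n (Suc i) = apow c n i" if "s + 1 \<le> i" "i < K" for i
      using flat less.IH that by (cases "i < B") auto
    have "apow c n K \<subseteq> apow c n (Suc K)"
    proof (rule prod_into_span)
      show "2 \<le> K" using less.prems B2 by simp
      show "V.subspace (apow c n (Suc K))" by (rule apow_subspace)
      fix i x y assume i: "1 \<le> i" "i < K" and x: "x \<in> apow c n i" and y: "y \<in> apow c n (K - i)"
      have ij: "i + (K - i) = K" "1 \<le> K - i" using i by auto
      show "amult c n x y \<in> apow c n (Suc K)"
      proof (cases "apow c n (Suc i) = apow c n i")
        case True
        then show ?thesis using apow_mult[of x c n "Suc i" y "K - i"] x y ij by auto
      next
        case F1: False
        show ?thesis
        proof (cases "apow c n (Suc (K - i)) = apow c n (K - i)")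
          case True
          then show ?thesis using apow_mult[of x c n i y "Suc (K - i)"] x y ij i by auto
        next
          case F2: False
          have "i \<le> s" using fl[of i] F1 i by linarith
          moreover have "K - i \<le> s" using fl[of "K - i"] F2 ij i by linarith
          ultimately show ?thesis using pairs[of i "K - i"] F1 F2 i ij less.prems x y by auto
        qed
      qed
    qed
    then show ?case using apow_mono1[of K c n] less.prems B2 by auto
  qed
  have eq: "apow c n K = apow c n B" if "B \<le> K" for K
    using that
  proof (induction K rule: dec_induct)
    case base then show ?case by simp
  next
    case (step K) then show ?case using st by simp
  qed
  obtain K0 where K0: "K0 \<ge> 1" "apow c n K0 = {0}"
    using nil unfolding nilpotent_alg_def zero_fun_def by auto
  have "apow c n (max K0 B) \<subseteq> apow c n K0" by (rule apow_mono) (use K0 in auto)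
  then have "apow c n B \<subseteq> {0}" using eq[of "max K0 B"] K0 by auto
  then show ?thesis using apow_zero by auto
qed

lemma amult_addL: "amult c n (x + y) z = amult c n x z + amult c n y z"
  by (auto simp: amult_def fun_eq_iff algebra_simps sum.distrib)
lemma amult_addR: "amult c n z (x + y) = amult c n z x + amult c n z y"
  by (auto simp: amult_def fun_eq_iff algebra_simps sum.distrib)
lemma amult_scL: "amult c n (sc a x) z = sc a (amult c n x z)"
  by (auto simp: amult_def sc_def fun_eq_iff algebra_simps sum_distrib_left)
lemma amult_scR: "amult c n z (sc a x) = sc a (amult c n z x)"
  by (auto simp: amult_def sc_def fun_eq_iff algebra_simps sum_distrib_left)

lemma amult_self: "anticomm c n \<Longrightarrow> w \<in> vecs n \<Longrightarrow> amult c n w w = 0"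
  unfolding anticomm_def
proof -
  assume "\<forall>x\<in>vecs n. \<forall>y\<in>vecs n. amult c n x y = (\<lambda>k. - amult c n y x k)" "w \<in> vecs n"
  then have "\<And>k. amult c n w w k = - amult c n w w k" by metis
  then show "amult c n w w = 0" by (auto simp: fun_eq_iff)
qed

lemma sq_lemma:
  assumes ac: "anticomm c n" and s1: "1 \<le> s" and w: "w \<in> apow c n s"
    and sp: "apow c n s \<subseteq> V.span (insert w (apow c n (Suc s)))"
    and x: "x \<in> apow c n s" and y: "y \<in> apow c n s"
  shows "amult c n x y \<in> apow c n (Suc (s + s))"
proof -
  have spn: "V.span (apow c n (Suc s)) = apow c n (Suc s)" using apow_subspace by simp
  obtain a where a: "x - sc a w \<in> apow c n (Suc s)" using sp x spn by (auto simp: V.span_insert)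
  obtain b where b: "y - sc b w \<in> apow c n (Suc s)" using sp y spn by (auto simp: V.span_insert)
  define u where "u = x - sc a w"
  define v where "v = y - sc b w"
  have xu: "x = u + sc a w" and yv: "y = v + sc b w" by (auto simp: u_def v_def)
  have wv: "w \<in> vecs n" using w apow_vecs by blast
  have e1: "amult c n x y = amult c n u y + sc a (amult c n w y)"
    by (simp add: xu amult_addL amult_scL)
  have e2: "amult c n w y = amult c n w v + sc b (amult c n w w)"
    by (simp add: yv amult_addR amult_scR)
  have "amult c n x y = amult c n u y + sc a (amult c n w v + sc b (amult c n w w))"
    using e1 e2 by simp
  also have "\<dots> = amult c n u y + sc a (amult c n w v)"
    using amult_self[OF ac wv] by (simp add: sc_def zero_fun_def)
  finally have eq: "amult c n x y = amult c n u y + sc a (amult c n w v)" .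
  have 1: "amult c n u y \<in> apow c n (Suc (s + s))"
    using apow_mult[of u c n "Suc s" y s] a y s1 u_def by auto
  have 2: "amult c n w v \<in> apow c n (Suc (s + s))"
    using apow_mult[of w c n s v "Suc s"] b w s1 v_def by auto
  show ?thesis unfolding eq
    using 1 2 apow_subspace[of c n "Suc (s+s)"] V.subspace_add V.subspace_scale by blast
qed

definition ev :: "nat \<Rightarrow> cvec" where "ev k = (\<lambda>j. if j = k then 1 else 0)"

lemma vecs_span: "vecs n \<subseteq> V.span (ev ` {1..n})"
proof
  fix x assume x: "x \<in> vecs n"
  have "x = (\<Sum>k\<in>{1..n}. sc (x k) (ev k))"
  proof (rule ext)
    fix j
    have "(\<Sum>k\<in>{1..n}. sc (x k) (ev k)) j = (\<Sum>k\<in>{1..n}. x k * ev k j)"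
      by (simp add: sum_fun_apply sc_def)
    also have "\<dots> = (\<Sum>k\<in>{1..n}. if j = k then x j else 0)"
      by (rule sum.cong) (auto simp: ev_def)
    also have "\<dots> = x j" using x by (auto simp: vecs_def)
    finally show "x j = (\<Sum>k\<in>{1..n}. sc (x k) (ev k)) j" by simp
  qed
  also have "\<dots> \<in> V.span (ev ` {1..n})"
    by (intro V.span_sum V.span_scale V.span_base) auto
  finally show "x \<in> V.span (ev ` {1..n})" .
qed

lemma dim_le_n: "S \<subseteq> vecs n \<Longrightarrow> V.dim S \<le> n"
proof -
  assume "S \<subseteq> vecs n"
  then have "V.dim S \<le> card (ev ` {1..n})" using vecs_span by (intro V.dim_le_card) auto
  also have "\<dots> \<le> n" using card_image_le[of "{1..n}" ev] by simp
  finally show ?thesis .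
qed

lemma dim_apow_le: "V.dim (apow c n k) \<le> n"
  using dim_le_n apow_vecs by blast



lemma indep_fin: "B \<subseteq> vecs n \<Longrightarrow> V.independent B \<Longrightarrow> finite B"
  using V.independent_span_bound[of "ev ` {1..n}" B] vecs_span by auto

lemma dim_pos_gen: assumes "S \<subseteq> vecs n" "V.subspace S" "S \<noteq> {0}" shows "1 \<le> V.dim S"
proof (rule ccontr)
  assume "\<not> 1 \<le> V.dim S"
  obtain B where B: "B \<subseteq> S" "V.independent B" "S \<subseteq> V.span B" "card B = V.dim S"
    by (rule V.basis_exists)
  have "finite B" using indep_fin B assms by blast
  moreover have "card B = 0" using B(4) \<open>\<not> 1 \<le> V.dim S\<close> by simp
  ultimately have "B = {}" by simp
  then have "S \<subseteq> {0}" using B V.span_empty by simp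
  then show False using assms V.subspace_0 by blast
qed

lemma dim_lt_gen: assumes "S \<subseteq> T" "S \<noteq> T" "T \<subseteq> vecs n" "V.subspace S" "V.subspace T"
  shows "V.dim S < V.dim T"
proof -
  obtain B where B: "B \<subseteq> S" "V.independent B" "S \<subseteq> V.span B" "card B = V.dim S"
    by (rule V.basis_exists)
  have "\<not> T \<subseteq> S" using assms(1,2) subset_antisym by metis
  then obtain w where w: "w \<in> T" "w \<notin> S" by (auto simp: subset_iff)
  have "V.span B \<subseteq> S" by (rule V.span_minimal[OF B(1) assms(4)])
  then have "w \<notin> V.span B" using w(2) by blast
  then have ind: "V.independent (insert w B)" by (rule V.independent_insertI[OF _ B(2)])
  have sub: "insert w B \<subseteq> T" using B(1) w(1) assms(1) by blast
  obtain C where C: "insert w B \<subseteq> C" "C \<subseteq> T" "V.independent C" "T \<subseteq> V.span C"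
    by (rule V.maximal_independent_subset_extend[OF sub ind])
  have fC: "finite C" using indep_fin[of C n] C(2,3) assms(3) by blast
  have cC: "card C = V.dim T" by (rule V.basis_card_eq_dim[OF C(2) C(4) C(3)])
  have wB: "w \<notin> B" using B(1) w(2) by blast
  have "B \<subseteq> C" using C(1) by blast
  then have fB: "finite B" using fC by (rule finite_subset)
  have "card (insert w B) \<le> card C" using fC C(1) by (simp add: card_mono)
  then have "Suc (card B) \<le> card C" using card_insert_disjoint[OF fB wB] by simp
  then show ?thesis using B(4) cC by simp
qed

lemma dim_pos: "apow c n k \<noteq> {0} \<Longrightarrow> 1 \<le> V.dim (apow c n k)"
  by (rule dim_pos_gen[OF apow_vecs apow_subspace])

lemma dim_lt: "apow c n k \<subseteq> apow c n j \<Longrightarrow> apow c n k \<noteq> apow c n j \<Longrightarrow> V.dim (apow c n k) < V.dim (apow c n j)"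
  by (rule dim_lt_gen[OF _ _ apow_vecs apow_subspace apow_subspace])

lemma fib_double: "2 * fib m \<le> fib (m + 2)"
  using fib_plus_2[of m] fib_Suc_mono[of m] by simp

lemma ev_vecs: "1 \<le> k \<Longrightarrow> k \<le> n \<Longrightarrow> ev k \<in> vecs n"
  by (auto simp: ev_def vecs_def)

lemma ev_nz: "ev k \<noteq> 0"
  by (auto simp: ev_def fun_eq_iff)

lemma upper_main:
  assumes nil: "nilpotent_alg c n" and ac: "anticomm c n"
  shows "1 \<le> k \<Longrightarrow> apow c n k \<noteq> {0} \<Longrightarrow> k \<le> fib (n - V.dim (apow c n k) + 1)"
proof (induction k rule: less_induct)
  case (less k)
  show ?case
  proof (cases "k = 1")
    case True
    have "fib (n - V.dim (apow c n k) + 1) \<ge> 1" using fib_neq_0_nat[of "n - V.dim (apow c n k) + 1"] by simp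
    then show ?thesis using True by simp
  next
    case False
    hence k2: "2 \<le> k" using less.prems(1) by simp
    have contra: "False" if "2 \<le> B" "B \<le> k" "apow c n B = {0}" for B
    proof -
      have "apow c n k \<subseteq> apow c n B" by (rule apow_mono) (use that in auto)
      then have "apow c n k \<subseteq> {0}" using that(3) by simp
      then show False using less.prems(2) apow_zero[of c n k] by blast
    qed
    define J where "J = {j. 1 \<le> j \<and> j < k \<and> apow c n j \<noteq> apow c n k}"
    have finJ: "finite J" unfolding J_def by auto
    show ?thesis
    proof (cases "J = {}")
      case True
      have N1: "apow c n 1 = apow c n k" using True k2 unfolding J_def by auto
      have "apow c n k \<subseteq> apow c n 2" by (rule apow_mono) (use k2 in auto)
      moreover have "apow c n 2 \<subseteq> apow c n 1" by (rule apow_mono) auto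
      ultimately have N21: "apow c n 2 = apow c n 1" using N1 by (intro antisym) auto
      have "apow c n 2 = {0}"
      proof (rule stab[OF nil, of 2 0])
        show "2 \<le> (2::nat)" by simp
        fix i :: nat assume "0 + 1 \<le> i" "i < 2"
        then have "i = 1" by simp
        then show "apow c n (Suc i) = apow c n i" using N21 by (simp add: numeral_2_eq_2)
      qed auto
      then show ?thesis using contra[of 2] k2 by simp
    next
      case False
      define s where "s = Max J"
      have sJ: "s \<in> J" unfolding s_def using Max_in finJ False by blast
      have s1: "1 \<le> s" "s < k" "apow c n s \<noteq> apow c n k" using sJ unfolding J_def by auto
      have smax: "apow c n j = apow c n k" if "s < j" "j < k" for j
      proof (rule ccontr)
        assume "apow c n j \<noteq> apow c n k"
        then have "j \<in> J" using that s1 unfolding J_def by auto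
        then have "j \<le> s" unfolding s_def using finJ by simp
        then show False using that by simp
      qed
      have Nks: "apow c n k \<subseteq> apow c n s" by (rule apow_mono) (use s1 in auto)
      have flatk: "apow c n (Suc i) = apow c n i" if "s + 1 \<le> i" "i < k" for i
      proof -
        have "apow c n i = apow c n k" using smax that by simp
        moreover have "apow c n (Suc i) = apow c n k" using smax[of "Suc i"] that by (cases "Suc i = k") auto
        ultimately show ?thesis by simp
      qed
      have Ns1: "apow c n (Suc s) = apow c n k" using smax[of "Suc s"] s1 by (cases "Suc s = k") auto
      have dks: "V.dim (apow c n k) < V.dim (apow c n s)" by (rule dim_lt[OF Nks]) (use s1 in auto)
      have dsn: "V.dim (apow c n s) \<le> n" by (rule dim_apow_le)
      have Nsnz: "apow c n s \<noteq> {0}" using Nks less.prems(2) apow_zero[of c n k] by blast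
      have IHs: "s \<le> fib (n - V.dim (apow c n s) + 1)" using less.IH[OF s1(2) s1(1) Nsnz] .
      show ?thesis
      proof (cases "\<exists>w\<in>apow c n s. apow c n s \<subseteq> V.span (insert w (apow c n (Suc s)))")
        case True
        then obtain w where w: "w \<in> apow c n s" "apow c n s \<subseteq> V.span (insert w (apow c n (Suc s)))" by blast
        define P where "P = {j. 1 \<le> j \<and> j < s \<and> apow c n j \<noteq> apow c n s}"
        have finP: "finite P" unfolding P_def by auto
        define p where "p = (if P = {} then 0 else Max P)"
        have pflat: "apow c n j = apow c n s" if "p < j" "j < s" "1 \<le> j" for j
        proof (rule ccontr)
          assume "apow c n j \<noteq> apow c n s"
          then have jP: "j \<in> P" using that unfolding P_def by auto
          then have "P \<noteq> {}" by auto
          then have "j \<le> p" unfolding p_def using finP jP by simp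
          then show False using that by simp
        qed
        have ps: "p < s"
        proof (cases "P = {}")
          case True then show ?thesis using s1 unfolding p_def by simp
        next
          case False
          then have "Max P \<in> P" using finP Max_in by blast
          then show ?thesis unfolding p_def P_def using False by auto
        qed
        have pb: "p \<le> fib (n - V.dim (apow c n s))"
        proof (cases "P = {}")
          case True then show ?thesis unfolding p_def by simp
        next
          case False
          then have pP: "p \<in> P" unfolding p_def using finP Max_in by auto
          then have p1: "1 \<le> p" "p < s" "apow c n p \<noteq> apow c n s" unfolding P_def by auto
          have Nsp: "apow c n s \<subseteq> apow c n p" by (rule apow_mono) (use p1 in auto)
          have dsp: "V.dim (apow c n s) < V.dim (apow c n p)" by (rule dim_lt[OF Nsp]) (use p1 in auto)
          have dpn: "V.dim (apow c n p) \<le> n" by (rule dim_apow_le)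
          have Npnz: "apow c n p \<noteq> {0}" using Nsp Nsnz apow_zero[of c n s] by blast
          have "p \<le> fib (n - V.dim (apow c n p) + 1)" using less.IH[OF _ p1(1) Npnz] p1 s1 by linarith
          also have "\<dots> \<le> fib (n - V.dim (apow c n s))" by (rule fib_mono) (use dsp dpn in simp)
          finally show ?thesis .
        qed
        have ksp: "k \<le> s + p"
        proof (rule ccontr)
          assume nk: "\<not> k \<le> s + p"
          have "apow c n (s + p + 1) = {0}"
          proof (rule stab[OF nil, of "s + p + 1" s])
            show "2 \<le> s + p + 1" using s1 by simp
            fix i assume "s + 1 \<le> i" "i < s + p + 1"
            then show "apow c n (Suc i) = apow c n i" using flatk nk by simp
          next
            fix i j assume ij: "1 \<le> i" "i \<le> s" "1 \<le> j" "j \<le> s" "s + p + 1 \<le> i + j"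
            show "apow c n (Suc i) = apow c n i \<or> apow c n (Suc j) = apow c n j \<or>
              (\<forall>x\<in>apow c n i. \<forall>y\<in>apow c n j. amult c n x y \<in> apow c n (Suc (i + j)))"
            proof (cases "p < i \<and> i < s")
              case True
              have "apow c n i = apow c n s" using pflat True ij by simp
              moreover have "apow c n (Suc i) = apow c n s" using pflat[of "Suc i"] True by (cases "Suc i = s") auto
              ultimately show ?thesis by simp
            next
              case Fi: False
              show ?thesis
              proof (cases "p < j \<and> j < s")
                case True
                have "apow c n j = apow c n s" using pflat True ij by simp
                moreover have "apow c n (Suc j) = apow c n s" using pflat[of "Suc j"] True by (cases "Suc j = s") auto
                ultimately show ?thesis by simp
              next
                case Fj: False
                have "i = s \<and> j = s" using Fi Fj ij ps by linarith
                then show ?thesis using sq_lemma[OF ac s1(1) w(1) w(2)] by simp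
              qed
            qed
          qed
          then show False using contra[of "s + p + 1"] s1 nk by simp
        qed
        have "k \<le> fib (n - V.dim (apow c n s) + 1) + fib (n - V.dim (apow c n s))"
          using ksp IHs pb by simp
        also have "\<dots> = fib (n - V.dim (apow c n s) + 2)" using fib_plus_2[of "n - V.dim (apow c n s)"] by simp
        also have "\<dots> \<le> fib (n - V.dim (apow c n k) + 1)" by (rule fib_mono) (use dks dsn in simp)
        finally show ?thesis .
      next
        case False
        have "\<not> apow c n s \<subseteq> apow c n k" using Nks s1 by blast
        then obtain w where w: "w \<in> apow c n s" "w \<notin> apow c n k" by blast
        define T where "T = V.span (insert w (apow c n (Suc s)))"
        have Tsub: "V.subspace T" unfolding T_def by simp
        have kT: "apow c n k \<subseteq> T" unfolding T_def Ns1 by (rule order.trans[OF _ V.span_superset]) auto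
        have wT: "w \<in> T" unfolding T_def by (rule V.span_base) simp
        have Ts: "T \<subseteq> apow c n s" unfolding T_def
          by (rule V.span_minimal) (use w(1) Ns1 Nks apow_subspace in auto)
        have Tns: "T \<noteq> apow c n s" using False w(1) unfolding T_def by auto
        have Tv: "T \<subseteq> vecs n" using Ts apow_vecs by blast
        have d1: "V.dim (apow c n k) < V.dim T"
          by (rule dim_lt_gen[OF kT _ Tv apow_subspace Tsub]) (use wT w(2) in blast)
        have d2: "V.dim T < V.dim (apow c n s)"
          by (rule dim_lt_gen[OF Ts Tns apow_vecs Tsub apow_subspace])
        have k2s: "k \<le> 2 * s"
        proof (rule ccontr)
          assume nk: "\<not> k \<le> 2 * s"
          have "apow c n (s + s + 1) = {0}"
          proof (rule stab[OF nil, of "s + s + 1" s])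
            show "2 \<le> s + s + 1" using s1 by simp
            fix i assume "s + 1 \<le> i" "i < s + s + 1"
            then show "apow c n (Suc i) = apow c n i" using flatk nk by simp
          qed auto
          then show False using contra[of "s + s + 1"] s1 nk by simp
        qed
        have "k \<le> 2 * fib (n - V.dim (apow c n s) + 1)" using k2s IHs by simp
        also have "\<dots> \<le> fib (n - V.dim (apow c n s) + 1 + 2)" by (rule fib_double)
        also have "\<dots> \<le> fib (n - V.dim (apow c n k) + 1)" by (rule fib_mono) (use d1 d2 dsn in simp)
        finally show ?thesis .
      qed
    qed
  qed
qed

lemma conj1:
  assumes n1: "1 \<le> n" and ac: "anticomm c n" and nil: "nilpotent_alg c n"
  shows "nil_index c n \<le> fib n + 1"
proof -
  obtain K0 where K0: "K0 \<ge> 1" "apow c n K0 = {\<lambda>_. 0}" using nil unfolding nilpotent_alg_def by auto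
  define m where "m = nil_index c n"
  have m: "m \<ge> 1 \<and> apow c n m = {\<lambda>_. 0}" unfolding m_def nil_index_def
    by (rule LeastI[of _ K0]) (use K0 in auto)
  have "ev 1 \<in> apow c n 1" using ev_vecs[of 1 n] n1 by (simp add: apow_le1)
  moreover have "ev 1 \<noteq> (\<lambda>_. 0)" using ev_nz[of 1] by (simp add: zero_fun_def)
  ultimately have "m \<noteq> 1" using m by auto
  then have m2: "m \<ge> 2" using m by simp
  have lt: "m - 1 < nil_index c n" using m2 m_def by simp
  have "\<not> (m - 1 \<ge> 1 \<and> apow c n (m - 1) = {\<lambda>_. 0})"
    by (rule not_less_Least[OF lt[unfolded nil_index_def]])
  then have nz: "apow c n (m - 1) \<noteq> {0}" using m2 by (simp add: zero_fun_def)
  have "m - 1 \<le> fib (n - V.dim (apow c n (m - 1)) + 1)"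
    by (rule upper_main[OF nil ac]) (use m2 nz in auto)
  also have "\<dots> \<le> fib n" by (rule fib_mono) (use dim_pos[OF nz] n1 in simp)
  finally show ?thesis using m_def by simp
qed

definition tri :: "sconst \<Rightarrow> nat \<Rightarrow> bool" where
  "tri c n \<longleftrightarrow> (\<forall>i\<in>{1..n}. \<forall>j\<in>{1..n}. \<forall>k\<in>{1..n}. k \<le> max i j \<longrightarrow> c i j k = 0)"

lemma nilp_tri:
  assumes tr: "tri c n"
  shows "nilpotent_alg c n"
proof -
  have Z: "\<forall>k. 2^h \<le> k \<longrightarrow> (\<forall>x\<in>apow c n k. \<forall>j\<le>h. x j = 0)" for h
  proof (induction h)
    case 0
    show ?case using apow_vecs unfolding vecs_def by fastforce
  next
    case (Suc h)
    show ?case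
    proof (intro allI impI)
      fix k :: nat assume kh: "2 ^ Suc h \<le> k"
      have "(2::nat) \<le> 2 ^ Suc h" by (simp add: self_le_power)
      then have k2: "2 \<le> k" using kh by linarith
      define S where "S = {x::cvec. \<forall>j\<le>Suc h. x j = 0}"
      have "apow c n k \<subseteq> S"
      proof (rule prod_into_span[OF k2])
        show "V.subspace S" unfolding S_def V.subspace_def sc_def by auto
        fix i x y assume i: "1 \<le> i" "i < k" and x: "x \<in> apow c n i" and y: "y \<in> apow c n (k - i)"
        have "2 ^ h \<le> i \<or> 2 ^ h \<le> k - i" using kh by auto
        then have xy: "(\<forall>j\<le>h. x j = 0) \<or> (\<forall>j\<le>h. y j = 0)" using Suc.IH x y by blast
        show "amult c n x y \<in> S" unfolding S_def mem_Collect_eq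
        proof (intro allI impI)
          fix m assume mh: "m \<le> Suc h"
          show "amult c n x y m = 0"
          proof (cases "m \<in> {1..n}")
            case False then show ?thesis unfolding amult_def by auto
          next
            case True
            have "\<And>a b. a \<in> {1..n} \<Longrightarrow> b \<in> {1..n} \<Longrightarrow> x a * y b * c a b m = 0"
            proof -
              fix a b assume ab: "a \<in> {1..n}" "b \<in> {1..n}"
              show "x a * y b * c a b m = 0"
              proof (cases "m \<le> max a b")
                case True then show ?thesis using tr ab \<open>m \<in> {1..n}\<close> unfolding tri_def by auto
              next
                case False
                then have "a \<le> h" "b \<le> h" using mh by auto
                then show ?thesis using xy by auto
              qed
            qed
            then show ?thesis using True unfolding amult_def
              by (simp del: mult_eq_0_iff add: sum.neutral)
          qed
        qed
      qed
      then show "\<forall>x\<in>apow c n k. \<forall>j\<le>Suc h. x j = 0" unfolding S_def by blast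
    qed
  qed
  have "apow c n (2^n) = {0}"
  proof -
    have "x = 0" if "x \<in> apow c n (2^n)" for x
    proof
      fix j
      show "x j = 0 j"
      proof (cases "j \<le> n")
        case True
        have "\<forall>x\<in>apow c n (2^n). \<forall>j\<le>n. x j = 0" using Z[of n] by blast
        then show ?thesis using that True by (simp add: zero_fun_def)
      next
        case False then show ?thesis using that apow_vecs[of c n "2^n"] unfolding vecs_def by auto
      qed
    qed
    then show ?thesis using apow_zero by blast
  qed
  then show ?thesis unfolding nilpotent_alg_def zero_fun_def
    by (intro exI[of _ "2^n"]) simp
qed

definition chain :: "sconst \<Rightarrow> nat \<Rightarrow> bool" where
  "chain c n \<longleftrightarrow> (\<forall>i. 1 \<le> i \<and> i \<le> n - 2 \<longrightarrow> (\<forall>k\<in>{1..n}. c i (i+1) k = (if k = i + 2 then 1 else 0)))"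

definition diag :: "sconst \<Rightarrow> nat \<Rightarrow> bool" where
  "diag c n \<longleftrightarrow> (\<forall>i\<in>{1..n}. \<forall>k\<in>{1..n}. c i i k = 0)"

lemma dsum_single:
  assumes "A \<in> I" "B \<in> J" "finite I" "finite J"
    and f: "\<And>a b. a \<in> I \<Longrightarrow> b \<in> J \<Longrightarrow> f a b = (if a = A \<and> b = B then C else 0)"
  shows "(\<Sum>a\<in>I. \<Sum>b\<in>J. f a b) = (C :: complex)"
proof -
  have "(\<Sum>a\<in>I. \<Sum>b\<in>J. f a b) = (\<Sum>a\<in>I. if a = A then C else 0)"
  proof (rule sum.cong[OF refl])
    fix a assume a: "a \<in> I"
    have "(\<Sum>b\<in>J. f a b) = (\<Sum>b\<in>J. if a = A \<and> b = B then C else 0)"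
      by (rule sum.cong[OF refl]) (use f a in simp)
    also have "\<dots> = (if a = A then C else 0)"
      using assms(2,4) by (cases "a = A") (simp_all add: sum.delta')
    finally show "(\<Sum>b\<in>J. f a b) = (if a = A then C else 0)" .
  qed
  also have "\<dots> = C" using assms(1,3) by (simp add: sum.delta')
  finally show ?thesis .
qed

lemma amult_ev:
  assumes "i \<in> {1..n}" "j \<in> {1..n}" "k \<in> {1..n}"
  shows "amult c n (ev i) (ev j) k = c i j k"
proof -
  have "amult c n (ev i) (ev j) k = (\<Sum>a\<in>{1..n}. \<Sum>b\<in>{1..n}. ev i a * ev j b * c a b k)"
    using assms(3) by (simp add: amult_def)
  also have "\<dots> = c i j k"
    by (rule dsum_single[OF assms(1,2)]) (auto simp: ev_def)
  finally show ?thesis .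
qed

lemma lower:
  assumes tr: "tri c n" and dg: "diag c n" and ch: "chain c n"
  shows "1 \<le> k \<Longrightarrow> k \<le> n \<Longrightarrow> \<exists>v\<in>apow c n (fib k). v k = 1 \<and> (\<forall>j<k. v j = 0)"
proof (induction k rule: less_induct)
  case (less k)
  consider "k = 1" | "k = 2" | "k \<ge> 3" using less.prems by linarith
  then show ?case
  proof cases
    case 1
    then show ?thesis using ev_vecs[of 1 n] less.prems
      by (intro bexI[of _ "ev 1"]) (auto simp: apow_le1 ev_def)
  next
    case 2
    then show ?thesis using ev_vecs[of 2 n] less.prems
      by (intro bexI[of _ "ev 2"]) (auto simp: apow_le1 ev_def)
  next
    case 3
    obtain x where x: "x \<in> apow c n (fib (k-2))" "x (k-2) = 1" "\<forall>j<k-2. x j = 0"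
    proof -
      have "\<exists>v\<in>apow c n (fib (k-2)). v (k-2) = 1 \<and> (\<forall>j<k-2. v j = 0)"
        by (rule less.IH) (use 3 less.prems in auto)
      then show ?thesis using that by blast
    qed
    obtain y where y: "y \<in> apow c n (fib (k-1))" "y (k-1) = 1" "\<forall>j<k-1. y j = 0"
    proof -
      have "\<exists>v\<in>apow c n (fib (k-1)). v (k-1) = 1 \<and> (\<forall>j<k-1. v j = 0)"
        by (rule less.IH) (use 3 less.prems in auto)
      then show ?thesis using that by blast
    qed
    have fk: "fib k = fib (k-2) + fib (k-1)"
      using fib_plus_2[of "k-2"] 3 by (simp add: numeral_2_eq_2 Suc_diff_Suc)
    have f1: "1 \<le> fib (k-2)" "1 \<le> fib (k-1)" using fib_neq_0_nat[of "k-2"] fib_neq_0_nat[of "k-1"] 3 by auto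
    have vin: "amult c n x y \<in> apow c n (fib k)"
      using apow_mult[OF x(1) y(1) f1] fk by simp
    have val: "amult c n x y m = (if m = k then 1 else 0)" if m: "1 \<le> m" "m \<le> k" for m
    proof -
      have mn: "m \<in> {1..n}" using m less.prems by auto
      have A: "k - 2 \<in> {1..n}" "k - 1 \<in> {1..n}" using 3 less.prems by auto
      have "amult c n x y m = (\<Sum>a\<in>{1..n}. \<Sum>b\<in>{1..n}. x a * y b * c a b m)"
        using mn by (simp add: amult_def)
      also have "\<dots> = c (k-2) (k-1) m"
      proof (rule dsum_single[OF A])
        fix a b assume ab: "a \<in> {1..n}" "b \<in> {1..n}"
        show "x a * y b * c a b m = (if a = k - 2 \<and> b = k - 1 then c (k - 2) (k - 1) m else 0)"
        proof (cases "a = k - 2 \<and> b = k - 1")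
          case True then show ?thesis using x y by simp
        next
          case F: False
          have "x a * y b * c a b m = 0"
          proof (cases "a < k - 2")
            case True then show ?thesis using x by simp
          next
            case Fa: False
            show ?thesis
            proof (cases "b < k - 1")
              case True then show ?thesis using y by simp
            next
              case Fb: False
              show ?thesis
              proof (cases "m \<le> max a b")
                case True then show ?thesis using tr ab mn unfolding tri_def by auto
              next
                case False
                then have "a = b" using Fa Fb F m by auto
                then show ?thesis using dg ab mn unfolding diag_def by auto
              qed
            qed
          qed
          then show ?thesis by (subst if_not_P[OF F])
        qed
      qed simp_all
      also have "\<dots> = c (k-2) ((k-2)+1) m"
      proof -
        have "(k-2)+1 = k-1" using 3 by simp
        then show ?thesis by simp
      qed
      also have "\<dots> = (if m = (k-2)+2 then 1 else 0)"
      proof -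
        have "1 \<le> k - 2" "k - 2 \<le> n - 2" using 3 less.prems by auto
        then have "\<forall>kk\<in>{1..n}. c (k-2) ((k-2)+1) kk = (if kk = (k-2) + 2 then 1 else 0)"
          using ch unfolding chain_def by simp
        then show ?thesis using mn by (rule bspec)
      qed
      also have "\<dots> = (if m = k then 1 else 0)"
      proof -
        have "(k-2)+2 = k" using 3 by simp
        then show ?thesis by simp
      qed
      finally show ?thesis .
    qed
    show ?thesis
    proof (rule bexI[OF _ vin], intro conjI allI impI)
      show "amult c n x y k = 1" using val[of k] 3 by simp
      fix j assume j: "j < k"
      show "amult c n x y j = 0"
      proof (cases "j = 0")
        case True then show ?thesis by (simp add: amult_def)
      next
        case False then show ?thesis using val[of j] j by simp
      qed
    qed
  qed
qed

lemma index_exact: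
  assumes n1: "1 \<le> n" and ac: "anticomm c n" and tr: "tri c n" and dg: "diag c n" and ch: "chain c n"
  shows "nilpotent_alg c n \<and> nil_index c n = fib n + 1"
proof -
  have nil: "nilpotent_alg c n" by (rule nilp_tri[OF tr])
  have le: "nil_index c n \<le> fib n + 1" by (rule conj1[OF n1 ac nil])
  obtain v where v: "v \<in> apow c n (fib n)" "v n = 1" using lower[OF tr dg ch n1 order_refl] by blast
  obtain K0 where K0: "K0 \<ge> 1" "apow c n K0 = {\<lambda>_. 0}" using nil unfolding nilpotent_alg_def by auto
  define m where "m = nil_index c n"
  have m: "m \<ge> 1 \<and> apow c n m = {\<lambda>_. 0}" unfolding m_def nil_index_def
    by (rule LeastI[of _ K0]) (use K0 in auto)
  have "\<not> m \<le> fib n"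
  proof
    assume "m \<le> fib n"
    then have "apow c n (fib n) \<subseteq> apow c n m" using m by (intro apow_mono) auto
    then have "v = (\<lambda>_. 0)" using v m by auto
    then show False using v by simp
  qed
  then show ?thesis using nil le m_def by simp
qed

definition c0 :: sconst where
  "c0 i j k = (if j = i + 1 \<and> k = i + 2 then 1 else if i = j + 1 \<and> k = j + 2 then -1 else 0)"

lemma c0_anti: "c0 b a k = - c0 a b k"
  by (auto simp: c0_def)

lemma c0_anticomm: "anticomm c0 n"
  unfolding anticomm_def
proof (intro ballI ext)
  fix x y :: cvec and k
  show "amult c0 n x y k = - amult c0 n y x k"
  proof (cases "k \<in> {1..n}")
    case False then show ?thesis unfolding amult_def by auto
  next
    case True
    have "amult c0 n y x k = (\<Sum>i\<in>{1..n}. \<Sum>j\<in>{1..n}. y i * x j * c0 i j k)"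
      using True by (simp add: amult_def)
    also have "\<dots> = (\<Sum>j\<in>{1..n}. \<Sum>i\<in>{1..n}. y i * x j * c0 i j k)" by (rule sum.swap)
    also have "\<dots> = (\<Sum>j\<in>{1..n}. \<Sum>i\<in>{1..n}. - (x j * y i * c0 j i k))"
    proof (intro sum.cong refl)
      fix j i
      show "y i * x j * c0 i j k = - (x j * y i * c0 j i k)"
        using c0_anti[of i j k] by simp
    qed
    also have "\<dots> = - amult c0 n x y k"
      using True by (simp add: amult_def sum_negf)
    finally show ?thesis by simp
  qed
qed

lemma c0_tri: "tri c0 n" unfolding tri_def c0_def by auto
lemma c0_diag: "diag c0 n" unfolding diag_def c0_def by auto
lemma c0_chain: "chain c0 n" unfolding chain_def c0_def by auto

lemma inT_props:
  assumes "in_T n c"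
  shows "1 \<le> n" "anticomm c n" "tri c n" "diag c n" "chain c n"
proof -
  show "1 \<le> n" "anticomm c n" using assms unfolding in_T_def by auto
  show "tri c n" using assms unfolding in_T_def tri_def by auto
  show "chain c n" using assms unfolding in_T_def chain_def by auto
  show "diag c n" unfolding diag_def
  proof (intro ballI)
    fix i k assume i: "i \<in> {1..n}" and k: "k \<in> {1..n}"
    have "amult c n (ev i) (ev i) = 0"
      by (rule amult_self) (use assms i ev_vecs in \<open>auto simp: in_T_def\<close>)
    then have "amult c n (ev i) (ev i) k = 0" by simp
    then show "c i i k = 0" using amult_ev[OF i i k] by simp
  qed
qed

theorem mainTheorem4:
  shows "(\<forall>n\<ge>1. \<forall>c. anticomm c n \<and> nilpotent_alg c n \<longrightarrow> nil_index c n \<le> fib n + 1)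
       \<and> (\<forall>n\<ge>1. \<exists>c. anticomm c n \<and> nilpotent_alg c n \<and> nil_index c n = fib n + 1)
       \<and> (\<forall>n\<ge>6. \<forall>c. in_T n c \<longrightarrow> nilpotent_alg c n \<and> nil_index c n = fib n + 1)"
proof (intro conjI allI impI)
  fix n c assume "1 \<le> n" "anticomm c n \<and> nilpotent_alg c n"
  then show "nil_index c n \<le> fib n + 1" using conj1 by blast
next
  fix n :: nat assume n: "1 \<le> n"
  show "\<exists>c. anticomm c n \<and> nilpotent_alg c n \<and> nil_index c n = fib n + 1"
    using index_exact[OF n c0_anticomm c0_tri c0_diag c0_chain] c0_anticomm by blast
next
  fix n c assume "6 \<le> n" "in_T n c"
  then show "nilpotent_alg c n"
    using index_exact inT_props by blast
next
  fix n c assume "6 \<le> n" "in_T n c"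
  then show "nil_index c n = fib n + 1"
    using index_exact inT_props by blast
qed

end
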